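(* No ordinal metric on $\omega_1$ is an ultrametric; that is, for every ordinal metric $\rho:\omega_1^2\to\omega$ there are $\alpha,\beta,\gamma\in\omega_1$ with $\rho(\alpha,\beta)>\max(\rho(\alpha,\gamma),\rho(\gamma,\beta))$.
   Context: For a set of ordinals $X$, a function $\rho:X^2\to\omega$ is an ordinal metric if: (a) $\rho(\alpha,\beta)=0$ iff $\alpha=\beta$; (b) $\rho(\alpha,\beta)=\rho(\beta,\alpha)$; (c) for all $\alpha,\beta,\gamma\in X$ with $\alpha<\beta$ and $\alpha<\gamma$, $\rho(\alpha,\beta)\le\max(\rho(\alpha,\gamma),\rho(\beta,\gamma))$; (d) for every $\beta\in X$ and $k\in\omega$ the set $\{\alpha\le\beta:\rho(\alpha,\beta)\le k\}$ is finite. *)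

theory Defs
  imports Main "HOL-Library.Countable_Set"
begin

text \<open>omega_1 is represented by a well-ordered type that is uncountable while
every proper initial segment is countable; this characterises omega_1 up to
order isomorphism.\<close>

definition is_omega1 :: "'a::wellorder itself \<Rightarrow> bool" where
  "is_omega1 _ \<longleftrightarrow> \<not> countable (UNIV :: 'a set) \<and> (\<forall>x::'a. countable {y. y < x})"

definition ordinal_metric :: "'a::wellorder set \<Rightarrow> ('a \<Rightarrow> 'a \<Rightarrow> nat) \<Rightarrow> bool" where
  "ordinal_metric X \<rho> \<longleftrightarrow>
     (\<forall>\<alpha>\<in>X. \<forall>\<beta>\<in>X. \<rho> \<alpha> \<beta> = 0 \<longleftrightarrow> \<alpha> = \<beta>) \<and>
     (\<forall>\<alpha>\<in>X. \<forall>\<beta>\<in>X. \<rho> \<alpha> \<beta> = \<rho> \<beta> \<alpha>) \<and>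
     (\<forall>\<alpha>\<in>X. \<forall>\<beta>\<in>X. \<forall>\<gamma>\<in>X. \<alpha> < \<beta> \<and> \<alpha> < \<gamma> \<longrightarrow>
         \<rho> \<alpha> \<beta> \<le> max (\<rho> \<alpha> \<gamma>) (\<rho> \<beta> \<gamma>)) \<and>
     (\<forall>\<beta>\<in>X. \<forall>k::nat. finite {\<alpha>\<in>X. \<alpha> \<le> \<beta> \<and> \<rho> \<alpha> \<beta> \<le> k})"

end

theory Submission
  imports Defs
begin

lemma countable_fin_pred:
  fixes S :: "'a::wellorder set"
  assumes "\<And>x. x \<in> S \<Longrightarrow> finite {y\<in>S. y < x}"
  shows "countable S"
proof -
  have "inj_on (\<lambda>x. card {y\<in>S. y < x}) S"
  proof (rule inj_onI)
    fix x x' assume xs: "x \<in> S" "x' \<in> S" and eq: "card {y\<in>S. y < x} = card {y\<in>S. y < x'}"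
    show "x = x'"
    proof (rule ccontr)
      assume "x \<noteq> x'"
      then consider "x < x'" | "x' < x" by (metis neqE)
      then show False
      proof cases
        case 1
        have "{y\<in>S. y < x} \<subset> {y\<in>S. y < x'}" using 1 xs by auto
        then have "card {y\<in>S. y < x} < card {y\<in>S. y < x'}"
          using assms xs by (intro psubset_card_mono) auto
        then show False using eq by simp
      next
        case 2
        have "{y\<in>S. y < x'} \<subset> {y\<in>S. y < x}" using 2 xs by auto
        then have "card {y\<in>S. y < x'} < card {y\<in>S. y < x}"
          using assms xs by (intro psubset_card_mono) auto
        then show False using eq by simp
      qed
    qed
  qed
  then show ?thesis by (rule countableI_bij1[THEN countable_image] | meson countable_def inj_on_def)
qed

theorem mainTheorem20:
  fixes \<rho> :: "'a::wellorder \<Rightarrow> 'a \<Rightarrow> nat"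
  assumes "is_omega1 TYPE('a)"
    and "ordinal_metric UNIV \<rho>"
  shows "\<exists>\<alpha> \<beta> \<gamma>. \<rho> \<alpha> \<beta> > max (\<rho> \<alpha> \<gamma>) (\<rho> \<gamma> \<beta>)"
proof (rule ccontr)
  assume "\<not> ?thesis"
  then have U: "\<And>a b c. \<rho> a b \<le> max (\<rho> a c) (\<rho> c b)" by (metis not_less)
  have sym: "\<And>a b. \<rho> a b = \<rho> b a" and fin: "\<And>b k. finite {a. a \<le> b \<and> \<rho> a b \<le> k}"
    using assms(2) unfolding ordinal_metric_def by auto
  have unc: "\<not> countable (UNIV :: 'a set)" using assms(1) unfolding is_omega1_def by auto
  obtain b :: 'a where True by simp
  have C: "countable {a. \<rho> a b \<le> k}" for k
  proof (rule countable_fin_pred)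
    fix x assume x: "x \<in> {a. \<rho> a b \<le> k}"
    have "{y \<in> {a. \<rho> a b \<le> k}. y < x} \<subseteq> {a. a \<le> x \<and> \<rho> a x \<le> k}"
    proof
      fix y assume y: "y \<in> {y \<in> {a. \<rho> a b \<le> k}. y < x}"
      have "\<rho> y x \<le> max (\<rho> y b) (\<rho> b x)" by (rule U)
      then show "y \<in> {a. a \<le> x \<and> \<rho> a x \<le> k}" using x y sym[of b x] by auto
    qed
    then show "finite {y \<in> {a. \<rho> a b \<le> k}. y < x}" using fin finite_subset by blast
  qed
  have "(UNIV :: 'a set) = (\<Union>k. {a. \<rho> a b \<le> k})" by auto
  then have "countable (UNIV :: 'a set)" using C by (metis countable_UN UNIV_I countableI_type)
  then show False using unc by simp
qed

end
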